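(* Let $n\ge1$, let $L\subseteq\mathbb Z^n$ be a lattice, and let $(\cdot,\cdot)$ be an inner product on $\mathbb R^n$ for which the canonical basis $\vec e_1,\dots,\vec e_n$ is orthogonal. Assume $(L,(\cdot,\cdot))$ is a zonotopal lattice. Let $F$ be the linear subspace of $\mathbb R^n$ spanned by $L$ and let $\pi:\mathbb R^n\to F$ be the orthogonal projection onto $F$ with respect to $(\cdot,\cdot)$. Then $$\mathrm{DV}(L)=\pi(\mathrm{DV}(\mathbb Z^n))=\pi\big([-\tfrac12,\tfrac12]^n\big),$$ where $\mathrm{DV}(L)=\{\vec x\in F: (\vec x,\vec x)\le(\vec x-\vec v,\vec x-\vec v)\text{ for all }\vec v\in L\}$ and $\mathrm{DV}(\mathbb Z^n)=\{\vec x\in \mathbb R^n: (\vec x,\vec x)\le(\vec x-\vec v,\vec x-\vec v)\text{ for all }\vec v\in \mathbb Z^n\}$ are the Dirichlet–Voronoi polytopes with respect to $(\cdot,\cdot)$.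
   Context: A lattice $L\subseteq\mathbb Z^n$ is the $\mathbb Z$-span of finitely many linearly independent vectors of $\mathbb Z^n$. The support of $\vec v\in\mathbb R^n$ is $\underline{\vec v}=\{i: v_i\neq 0\}$. A vector $\vec u\in L$ is elementary if $\vec u\in\{-1,0,+1\}^n\setminus\{\vec 0\}$ and no nonzero vector of $L$ has support strictly contained in $\underline{\vec u}$. The pair $(L,(\cdot,\cdot))$ is a zonotopal lattice if for every $\vec v\in L\setminus\{\vec 0\}$ there is an elementary vector $\vec u\in L$ with $\underline{\vec u}\subseteq\underline{\vec v}$. *)

theory Defs
  imports "HOL-Analysis.Analysis"
begin

text \<open>Vectors of R^n are modelled as real^'n for a finite index type 'n (n = CARD('n) \<ge> 1).\<close>

definition int_vec :: "real^'n \<Rightarrow> bool" where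
  "int_vec x \<longleftrightarrow> (\<forall>i. x $ i \<in> \<int>)"

definition is_int_lattice :: "(real^'n) set \<Rightarrow> bool" where
  "is_int_lattice L \<longleftrightarrow>
     (\<exists>B. finite B \<and> (\<forall>b\<in>B. int_vec b) \<and> independent B \<and>
          L = {\<Sum>b\<in>B. c b *\<^sub>R b | c. \<forall>b\<in>B. c b \<in> \<int>})"

definition is_inner_product :: "(real^'n \<Rightarrow> real^'n \<Rightarrow> real) \<Rightarrow> bool" where
  "is_inner_product ip \<longleftrightarrow> bilinear ip \<and> (\<forall>x y. ip x y = ip y x) \<and>
     (\<forall>x. x \<noteq> 0 \<longrightarrow> ip x x > 0)"

definition supp :: "real^'n \<Rightarrow> 'n set" where
  "supp v = {i. v $ i \<noteq> 0}"

definition elementary :: "(real^'n) set \<Rightarrow> real^'n \<Rightarrow> bool" where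
  "elementary L u \<longleftrightarrow> u \<in> L \<and> u \<noteq> 0 \<and> (\<forall>i. u $ i \<in> {-1, 0, 1}) \<and>
     \<not> (\<exists>w\<in>L. w \<noteq> 0 \<and> supp w \<subset> supp u)"

text \<open>The defining condition of a zonotopal lattice (it does not depend on the inner product).\<close>
definition zonotopal_lattice :: "(real^'n) set \<Rightarrow> (real^'n \<Rightarrow> real^'n \<Rightarrow> real) \<Rightarrow> bool" where
  "zonotopal_lattice L ip \<longleftrightarrow>
     (\<forall>v\<in>L. v \<noteq> 0 \<longrightarrow> (\<exists>u. elementary L u \<and> supp u \<subseteq> supp v))"

definition orth_proj :: "(real^'n \<Rightarrow> real^'n \<Rightarrow> real) \<Rightarrow> (real^'n) set \<Rightarrow> real^'n \<Rightarrow> real^'n" where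
  "orth_proj ip F x = (THE y. y \<in> F \<and> (\<forall>f\<in>F. ip (x - y) f = 0))"

definition DV :: "(real^'n \<Rightarrow> real^'n \<Rightarrow> real) \<Rightarrow> (real^'n) set \<Rightarrow> (real^'n) set" where
  "DV ip L = {x \<in> span L. \<forall>v\<in>L. ip x x \<le> ip (x - v) (x - v)}"

definition Zn :: "(real^'n) set" where
  "Zn = {x. int_vec x}"

definition half_cube :: "(real^'n) set" where
  "half_cube = {x. \<forall>i. -1/2 \<le> x $ i \<and> x $ i \<le> 1/2}"

end

theory Submission
  imports Defs
begin

lemma ip_formula:
  fixes ip :: "real^'n \<Rightarrow> real^'n \<Rightarrow> real"
  assumes bl: "bilinear ip" and orth: "\<forall>i j. i \<noteq> j \<longrightarrow> ip (axis i 1) (axis j 1) = 0"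
  shows "ip x y = (\<Sum>i\<in>UNIV. ip (axis i 1) (axis i 1) * x$i * y$i)"
proof -
  have ex: "\<And>z::real^'n. z = (\<Sum>i\<in>UNIV. z$i *\<^sub>R axis i 1)"
    using basis_expansion by (metis (no_types, lifting) scalar_mult_eq_scaleR sum.cong)
  have "ip x y = ip (\<Sum>i\<in>UNIV. x$i *\<^sub>R axis i 1) (\<Sum>j\<in>UNIV. y$j *\<^sub>R axis j 1)"
    using ex[of x] ex[of y] by simp
  also have "\<dots> = (\<Sum>(i,j)\<in>UNIV\<times>UNIV. ip (x$i *\<^sub>R axis i 1) (y$j *\<^sub>R axis j 1))"
    by (rule bilinear_sum[OF bl])
  also have "\<dots> = (\<Sum>i\<in>UNIV. \<Sum>j\<in>UNIV. x$i * y$j * ip (axis i 1) (axis j 1))"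
    unfolding sum.cartesian_product[symmetric] by (simp add: bilinear_lmul[OF bl] bilinear_rmul[OF bl] ac_simps)
  also have "\<dots> = (\<Sum>i\<in>UNIV. x$i * y$i * ip (axis i 1) (axis i 1))"
  proof (rule sum.cong[OF refl])
    fix i
    show "(\<Sum>j\<in>UNIV. x$i * y$j * ip (axis i 1) (axis j 1)) = x$i * y$i * ip (axis i 1) (axis i 1)"
      by (subst sum.remove[of _ i]) (auto simp: orth intro!: sum.neutral)
  qed
  finally show ?thesis by (simp add: ac_simps)
qed


locale zl =
  fixes L :: "(real^'n) set" and ip :: "real^'n \<Rightarrow> real^'n \<Rightarrow> real"
    and w :: "'n \<Rightarrow> real" and B :: "(real^'n) set"
  assumes ip_eq: "\<And>x y. ip x y = (\<Sum>i\<in>UNIV. w i * x$i * y$i)"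
    and wpos: "\<And>i. w i > 0"
    and Bfin: "finite B" and Bint: "\<And>b. b \<in> B \<Longrightarrow> int_vec b"
    and L_eq: "L = {\<Sum>b\<in>B. c b *\<^sub>R b | c. \<forall>b\<in>B. c b \<in> \<int>}"
    and zono: "zonotopal_lattice L ip"
begin

lemma ip_sym: "ip x y = ip y x"
  by (simp add: ip_eq ac_simps)
lemma ip_add_l: "ip (x + y) z = ip x z + ip y z"
  by (simp add: ip_eq algebra_simps sum.distrib)
lemma ip_diff_l: "ip (x - y) z = ip x z - ip y z"
  by (simp add: ip_eq algebra_simps sum_subtractf)
lemma ip_scale_l: "ip (c *\<^sub>R x) z = c * ip x z"
  by (simp add: ip_eq algebra_simps sum_distrib_left)
lemma ip_add_r: "ip z (x + y) = ip z x + ip z y"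
  by (simp add: ip_eq algebra_simps sum.distrib)
lemma ip_diff_r: "ip z (x - y) = ip z x - ip z y"
  by (simp add: ip_eq algebra_simps sum_subtractf)
lemma ip_scale_r: "ip z (c *\<^sub>R x) = c * ip z x"
  by (simp add: ip_eq algebra_simps sum_distrib_left)
lemma ip_neg_r: "ip z (- x) = - ip z x"
  using ip_scale_r[of z "-1" x] by simp
lemma ip_zero_r: "ip z 0 = 0"
  by (simp add: ip_eq)
lemma ip_self_zero: "ip z z = 0 \<Longrightarrow> z = 0"
proof -
  assume h: "ip z z = 0"
  have "\<forall>i\<in>UNIV. w i * z$i * z$i = 0"
    using h unfolding ip_eq
    by (subst sum_nonneg_eq_0_iff[symmetric]) (auto simp: wpos less_imp_le mult.assoc)
  then show "z = 0" using wpos by (auto simp: vec_eq_iff) (metis less_irrefl)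
qed
lemma ip_expand: "ip (x - v) (x - v) = ip x x - 2 * ip x v + ip v v"
  by (simp add: ip_diff_l ip_diff_r ip_sym[of v x])

definition N :: "real^'n \<Rightarrow> real" where "N u = (\<Sum>i\<in>UNIV. w i * \<bar>u$i\<bar>)"

lemma L_zero: "0 \<in> L"
  unfolding L_eq by (rule CollectI, rule exI[of _ "\<lambda>_. 0"]) auto
lemma L_add: "u \<in> L \<Longrightarrow> v \<in> L \<Longrightarrow> u + v \<in> L"
proof -
  assume "u \<in> L" "v \<in> L"
  then obtain c d where c: "u = (\<Sum>b\<in>B. c b *\<^sub>R b)" "\<forall>b\<in>B. c b \<in> \<int>"
    and d: "v = (\<Sum>b\<in>B. d b *\<^sub>R b)" "\<forall>b\<in>B. d b \<in> \<int>" unfolding L_eq by auto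
  have "u + v = (\<Sum>b\<in>B. (c b + d b) *\<^sub>R b)" using c d by (simp add: sum.distrib scaleR_add_left)
  then show "u + v \<in> L" unfolding L_eq using c d by auto
qed
lemma L_smult: "u \<in> L \<Longrightarrow> k \<in> \<int> \<Longrightarrow> k *\<^sub>R u \<in> L"
proof -
  assume "u \<in> L" "k \<in> \<int>"
  then obtain c where c: "u = (\<Sum>b\<in>B. c b *\<^sub>R b)" "\<forall>b\<in>B. c b \<in> \<int>" unfolding L_eq by auto
  have "k *\<^sub>R u = (\<Sum>b\<in>B. (k * c b) *\<^sub>R b)" using c by (simp add: scaleR_sum_right)
  then show "k *\<^sub>R u \<in> L" unfolding L_eq using c \<open>k \<in> \<int>\<close> by auto
qed
lemma L_neg: "u \<in> L \<Longrightarrow> - u \<in> L"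
  using L_smult[of u "-1"] by simp
lemma L_diff: "u \<in> L \<Longrightarrow> v \<in> L \<Longrightarrow> u - v \<in> L"
  using L_add[OF _ L_neg[of v], of u] by simp
lemma L_int: "u \<in> L \<Longrightarrow> u$i \<in> \<int>"
proof -
  assume "u \<in> L"
  then obtain c where c: "u = (\<Sum>b\<in>B. c b *\<^sub>R b)" "\<forall>b\<in>B. c b \<in> \<int>" unfolding L_eq by auto
  have "u$i = (\<Sum>b\<in>B. c b * b$i)" using c by simp
  also have "\<dots> \<in> \<int>" using c Bint by (auto simp: int_vec_def intro!: Ints_sum)
  finally show ?thesis .
qed
lemma span_L: "span L = span B"
proof -
  have "L \<subseteq> span B"
  proof
    fix x assume "x \<in> L"
    then obtain c where "x = (\<Sum>b\<in>B. c b *\<^sub>R b)" unfolding L_eq by auto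
    moreover have "(\<Sum>b\<in>B. c b *\<^sub>R b) \<in> span B"
      by (rule span_sum) (auto intro: span_scale span_base)
    ultimately show "x \<in> span B" by simp
  qed
  moreover have "B \<subseteq> L"
  proof
    fix b assume b: "b \<in> B"
    have "b = (\<Sum>b'\<in>B. (if b' = b then 1 else 0) *\<^sub>R b')"
      using b Bfin by (simp add: if_distrib[of "\<lambda>c. c *\<^sub>R _"] sum.delta cong: if_cong)
    then show "b \<in> L" unfolding L_eq by (auto intro!: exI[of _ "\<lambda>b'. if b' = b then 1 else 0"])
  qed
  ultimately show ?thesis by (metis span_mono span_span subset_antisym span_subspace subspace_span)
qed

lemma elem_neg: "elementary L e \<Longrightarrow> elementary L (- e)"
  unfolding elementary_def using L_neg by (auto simp: supp_def)

lemma sign_trans: "(a::real) * b > 0 \<Longrightarrow> b * c > 0 \<Longrightarrow> a * c > 0"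
  by (auto simp: zero_less_mult_iff)

lemma conf_elem:
  assumes u: "u \<in> L" "u \<noteq> 0"
  shows "\<exists>e. elementary L e \<and> (\<forall>i. e$i \<noteq> 0 \<longrightarrow> e$i * u$i > 0)"
proof -
  define conf where "conf v \<longleftrightarrow> v \<in> L \<and> v \<noteq> 0 \<and> (\<forall>i. v$i \<noteq> 0 \<longrightarrow> v$i * u$i > 0)" for v
  have "conf u" using u by (auto simp: conf_def zero_less_mult_iff linorder_neq_iff)
  then obtain v where cv: "conf v" and vmin: "\<And>v'. conf v' \<Longrightarrow> card (supp v) \<le> card (supp v')"
    using ex_has_least_nat[of conf u "\<lambda>v. card (supp v)"] by blast
  from cv zono obtain e where el: "elementary L e" and se: "supp e \<subseteq> supp v"
    by (auto simp: zonotopal_lattice_def conf_def)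
  have "e \<noteq> 0" using el by (simp add: elementary_def)
  then obtain j where ej: "e$j \<noteq> 0" by (auto simp: vec_eq_iff)
  then have vj: "v$j \<noteq> 0" using se by (auto simp: supp_def)
  obtain e' where el': "elementary L e'" and se': "supp e' \<subseteq> supp v" and ej': "e'$j * v$j > 0"
  proof (cases "e$j * v$j > 0")
    case True then show ?thesis using that el se by blast
  next
    case False
    then have "(-e)$j * v$j > 0" using ej vj
      by (simp add: zero_less_mult_iff mult_less_0_iff) linarith
    moreover have "supp (-e) = supp e" by (auto simp: supp_def)
    ultimately show ?thesis using that elem_neg[OF el] se by metis
  qed
  have vint: "\<And>i. v$i \<in> \<int>" using cv L_int by (auto simp: conf_def)
  have e'vals: "\<And>i. e'$i \<in> {-1,0,1}" using el' by (auto simp: elementary_def)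
  define P where "P = {i. e'$i * v$i > 0}"
  define t where "t = Min ((\<lambda>i. \<bar>v$i\<bar>) ` P)"
  have Pne: "j \<in> P" using ej' by (simp add: P_def)
  have "t \<in> (\<lambda>i. \<bar>v$i\<bar>) ` P" unfolding t_def using Pne by (intro Min_in) auto
  then obtain i0 where i0: "i0 \<in> P" "t = \<bar>v$i0\<bar>" by auto
  have tle: "\<And>i. i \<in> P \<Longrightarrow> t \<le> \<bar>v$i\<bar>" unfolding t_def by (intro Min_le) auto
  have tint: "t \<in> \<int>" using i0 vint by simp
  have tpos: "t > 0" using i0 by (auto simp: P_def)
  define w' where "w' = v - t *\<^sub>R e'"
  have w'L: "w' \<in> L" unfolding w'_def
    using cv el' tint by (auto simp: conf_def elementary_def intro!: L_diff L_smult)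
  have A: "w'$i * v$i > 0" if "w'$i \<noteq> 0" for i
  proof -
    have wi: "w'$i = v$i - t * e'$i" by (simp add: w'_def)
    consider "e'$i = 0" | "e'$i = 1" | "e'$i = -1" using e'vals[of i] by auto
    then show ?thesis
    proof cases
      case 1 then show ?thesis using that wi by (auto simp: zero_less_mult_iff linorder_neq_iff)
    next
      case 2
      have vi: "v$i \<noteq> 0" using se' 2 by (auto simp: supp_def subset_iff)
      show ?thesis
      proof (cases "v$i > 0")
        case True
        then have "i \<in> P" using 2 by (simp add: P_def)
        then have "t \<le> v$i" using tle True by fastforce
        then have "w'$i > 0" using that wi 2 by auto
        then show ?thesis using True by simp
      next
        case False
        then have "w'$i < 0" using wi 2 tpos vi by auto
        then show ?thesis using False vi by (simp add: zero_less_mult_iff)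
      qed
    next
      case 3
      have vi: "v$i \<noteq> 0" using se' 3 by (auto simp: supp_def subset_iff)
      show ?thesis
      proof (cases "v$i < 0")
        case True
        then have "i \<in> P" using 3 by (simp add: P_def)
        then have "t \<le> - v$i" using tle True by fastforce
        then have "w'$i < 0" using that wi 3 by auto
        then show ?thesis using True by (simp add: zero_less_mult_iff)
      next
        case False
        then have "w'$i > 0" using wi 3 tpos vi by auto
        then show ?thesis using False vi by (simp add: zero_less_mult_iff)
      qed
    qed
  qed
  have B0: "w'$i0 = 0"
  proof -
    have "e'$i0 * v$i0 > 0" using i0 by (simp add: P_def)
    then consider "e'$i0 = 1" "v$i0 > 0" | "e'$i0 = -1" "v$i0 < 0"
      using e'vals[of i0] by (auto simp: zero_less_mult_iff)
    then show ?thesis using i0(2) by cases (auto simp: w'_def)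
  qed
  have w0: "w' = 0"
  proof (rule ccontr)
    assume nz: "w' \<noteq> 0"
    have "conf w'" unfolding conf_def
    proof (intro conjI allI impI)
      fix i assume h: "w'$i \<noteq> 0"
      then have "w'$i * v$i > 0" by (rule A)
      moreover then have "v$i \<noteq> 0" by auto
      then have "v$i * u$i > 0" using cv by (simp add: conf_def)
      ultimately show "w'$i * u$i > 0" by (rule sign_trans)
    qed (use w'L nz in auto)
    have "supp w' \<subseteq> supp v - {i0}" using A B0 by (auto simp: supp_def) (metis A mult_zero_right less_irrefl)
    moreover have "i0 \<in> supp v" using i0 by (auto simp: supp_def P_def)
    ultimately have "supp w' \<subset> supp v" by auto
    then have "card (supp w') < card (supp v)" by (intro psubset_card_mono) auto
    with vmin[OF \<open>conf w'\<close>] show False by simp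
  qed
  then have veq: "v = t *\<^sub>R e'" by (simp add: w'_def)
  have "\<forall>i. e'$i \<noteq> 0 \<longrightarrow> e'$i * u$i > 0"
  proof (intro allI impI)
    fix i assume "e'$i \<noteq> 0"
    then have "v$i \<noteq> 0" using veq tpos by simp
    then have "v$i * u$i > 0" using cv by (simp add: conf_def)
    then have "t * (e'$i * u$i) > 0" using veq by (simp add: mult.assoc)
    then show "e'$i * u$i > 0" using tpos by (simp add: zero_less_mult_iff)
  qed
  then show ?thesis using el' by blast
qed

lemma DV_L_ineq: "x \<in> DV ip L \<Longrightarrow> v \<in> L \<Longrightarrow> 2 * ip x v \<le> ip v v"
  unfolding DV_def using ip_expand[of x v] by auto

lemma elem_N: "elementary L e \<Longrightarrow> ip e e = N e"
proof -
  assume "elementary L e"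
  then have "\<And>i. e$i \<in> {-1,0,1}" by (auto simp: elementary_def)
  have "e$i * e$i = \<bar>e$i\<bar>" for i
  proof -
    consider "e$i = 0" | "e$i = 1" | "e$i = -1" using \<open>\<And>i. e$i \<in> {-1,0,1}\<close>[of i] by auto
    then show ?thesis by cases auto
  qed
  then show ?thesis unfolding ip_eq N_def by (simp add: mult.assoc)
qed

lemma main_L_aux:
  assumes x: "x \<in> DV ip L"
  shows "\<forall>u\<in>L. (\<Sum>i\<in>UNIV. \<bar>u$i\<bar>) \<le> real n \<longrightarrow> 2 * ip x u \<le> N u"
proof (induction n)
  case 0
  show ?case
  proof (intro ballI impI)
    fix u assume "u \<in> L" "(\<Sum>i\<in>UNIV. \<bar>u$i\<bar>) \<le> real 0"
    then have "(\<Sum>i\<in>UNIV. \<bar>u$i\<bar>) = 0" using sum_nonneg[of UNIV "\<lambda>i. \<bar>u$i\<bar>"] by (simp add: antisym)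
    then have "\<forall>i\<in>UNIV. \<bar>u$i\<bar> = 0" by (subst (asm) sum_nonneg_eq_0_iff) auto
    then have "u = 0" by (auto simp: vec_eq_iff)
    then show "2 * ip x u \<le> N u" by (simp add: ip_zero_r N_def)
  qed
next
  case (Suc n)
  show ?case
  proof (intro ballI impI)
    fix u assume uL: "u \<in> L" and M: "(\<Sum>i\<in>UNIV. \<bar>u$i\<bar>) \<le> real (Suc n)"
    show "2 * ip x u \<le> N u"
    proof (cases "u = 0")
      case True then show ?thesis by (simp add: ip_zero_r N_def)
    next
      case False
      then obtain e where el: "elementary L e" and ce: "\<And>i. e$i \<noteq> 0 \<Longrightarrow> e$i * u$i > 0"
        using conf_elem[OF uL] by blast
      have ev: "\<And>i. e$i \<in> {-1,0,1}" using el by (auto simp: elementary_def)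
      have ui: "\<And>i. u$i \<in> \<int>" using uL L_int by auto
      define u' where "u' = u - e"
      have u'L: "u' \<in> L" unfolding u'_def using uL el by (auto simp: elementary_def intro: L_diff)
      have absd: "\<bar>u$i\<bar> = \<bar>u'$i\<bar> + \<bar>e$i\<bar>" for i
      proof -
        consider "e$i = 0" | "e$i = 1" | "e$i = -1" using ev[of i] by auto
        then show ?thesis
        proof cases
          case 2
          then have "u$i > 0" using ce[of i] by simp
          moreover have "1 \<le> \<bar>u$i\<bar>" using ui[of i] \<open>u$i > 0\<close> by (intro Ints_nonzero_abs_ge1) auto
          ultimately have "u$i \<ge> 1" by linarith
          then show ?thesis using 2 by (simp add: u'_def)
        next
          case 3
          then have "u$i < 0" using ce[of i] by simp
          moreover have "1 \<le> \<bar>u$i\<bar>" using ui[of i] \<open>u$i < 0\<close> by (intro Ints_nonzero_abs_ge1) auto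
          ultimately have "u$i \<le> -1" by linarith
          then show ?thesis using 3 by (simp add: u'_def)
        qed (simp add: u'_def)
      qed
      have "e \<noteq> 0" using el by (simp add: elementary_def)
      then obtain j where "e$j \<noteq> 0" by (auto simp: vec_eq_iff)
      then have ej1: "\<bar>e$j\<bar> = 1" using ev[of j] by auto
      have "1 \<le> (\<Sum>i\<in>UNIV. \<bar>e$i\<bar>)"
        using ej1 member_le_sum[of j UNIV "\<lambda>i. \<bar>e$i\<bar>"] by simp
      moreover have "(\<Sum>i\<in>UNIV. \<bar>u$i\<bar>) = (\<Sum>i\<in>UNIV. \<bar>u'$i\<bar>) + (\<Sum>i\<in>UNIV. \<bar>e$i\<bar>)"
        by (simp add: absd sum.distrib)
      ultimately have "(\<Sum>i\<in>UNIV. \<bar>u'$i\<bar>) \<le> real n" using M by simp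
      then have IH: "2 * ip x u' \<le> N u'" using Suc u'L by blast
      have Nsplit: "N u = N u' + N e" unfolding N_def by (simp add: absd algebra_simps sum.distrib)
      have "u = u' + e" by (simp add: u'_def)
      then have "ip x u = ip x u' + ip x e" using ip_add_r by simp
      moreover have "2 * ip x e \<le> N e" using DV_L_ineq[OF x, of e] el elem_N
        by (auto simp: elementary_def)
      ultimately show ?thesis using IH Nsplit by simp
    qed
  qed
qed

lemma main_L: "x \<in> DV ip L \<Longrightarrow> u \<in> L \<Longrightarrow> 2 * ip x u \<le> N u"
proof -
  assume a: "x \<in> DV ip L" "u \<in> L"
  have "(\<Sum>i\<in>UNIV. \<bar>u$i\<bar>) \<le> real (nat \<lceil>\<Sum>i\<in>UNIV. \<bar>u$i\<bar>\<rceil>)" by (rule real_nat_ceiling_ge)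
  then show ?thesis using main_L_aux[OF a(1), of "nat \<lceil>\<Sum>i\<in>UNIV. \<bar>u$i\<bar>\<rceil>"] a(2) by blast
qed

lemma floor_lim: "(\<lambda>m. real_of_int \<lfloor>(real m + 1) * c\<rfloor> / (real m + 1)) \<longlonglongrightarrow> c"
proof (rule real_tendsto_sandwich)
  have "(\<lambda>m::nat. inverse (real (Suc m))) \<longlonglongrightarrow> 0" by (rule LIMSEQ_inverse_real_of_nat)
  then have "(\<lambda>m::nat. 1 / (real m + 1)) \<longlonglongrightarrow> 0" by (simp add: divide_inverse add.commute)
  then show "(\<lambda>m::nat. c - 1 / (real m + 1)) \<longlonglongrightarrow> c"
    using tendsto_diff[OF tendsto_const[of c]] by fastforce
  show "(\<lambda>m::nat. c) \<longlonglongrightarrow> c" by simp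
  show "\<forall>\<^sub>F m in sequentially. c - 1 / (real m + 1) \<le> real_of_int \<lfloor>(real m + 1) * c\<rfloor> / (real m + 1)"
  proof (rule always_eventually, rule allI)
    fix m :: nat
    have p: "real m + 1 > 0" by simp
    have "(real m + 1) * c - 1 \<le> real_of_int \<lfloor>(real m + 1) * c\<rfloor>" by linarith
    then have "((real m + 1) * c - 1) / (real m + 1) \<le> real_of_int \<lfloor>(real m + 1) * c\<rfloor> / (real m + 1)"
      using p by (intro divide_right_mono) auto
    moreover have "c - 1 / (real m + 1) = ((real m + 1) * c - 1) / (real m + 1)" using p by (simp add: field_simps)
    ultimately show "c - 1 / (real m + 1) \<le> real_of_int \<lfloor>(real m + 1) * c\<rfloor> / (real m + 1)" by simp
  qed
  show "\<forall>\<^sub>F m in sequentially. real_of_int \<lfloor>(real m + 1) * c\<rfloor> / (real m + 1) \<le> c"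
  proof (rule always_eventually, rule allI)
    fix m :: nat
    have p: "real m + 1 > 0" by simp
    have "real_of_int \<lfloor>(real m + 1) * c\<rfloor> \<le> (real m + 1) * c" by linarith
    then show "real_of_int \<lfloor>(real m + 1) * c\<rfloor> / (real m + 1) \<le> c"
      using p by (simp add: field_simps)
  qed
qed

lemma N_scale: "r \<ge> 0 \<Longrightarrow> N (r *\<^sub>R v) = r * N v"
  unfolding N_def by (simp add: abs_mult sum_distrib_left algebra_simps)

lemma main_span:
  assumes x: "x \<in> DV ip L" and u: "u \<in> span L"
  shows "2 * ip x u \<le> N u"
proof -
  obtain c where uc: "u = (\<Sum>b\<in>B. c b *\<^sub>R b)"
    using u span_L span_finite[OF Bfin] by auto
  define z where "z m = (\<Sum>b\<in>B. real_of_int \<lfloor>(real m + 1) * c b\<rfloor> *\<^sub>R b)" for m :: nat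
  define um where "um m = (1 / (real m + 1)) *\<^sub>R z m" for m :: nat
  define f where "f v = N v - 2 * ip x v" for v
  have zL: "z m \<in> L" for m unfolding z_def L_eq by auto
  have fz: "f (um m) \<ge> 0" for m
  proof -
    have "f (um m) = (1 / (real m + 1)) * f (z m)"
      unfolding f_def um_def by (simp add: N_scale ip_scale_r algebra_simps)
    moreover have "f (z m) \<ge> 0" using main_L[OF x zL[of m]] by (simp add: f_def)
    ultimately show ?thesis by simp
  qed
  have umeq: "um m = (\<Sum>b\<in>B. (real_of_int \<lfloor>(real m + 1) * c b\<rfloor> / (real m + 1)) *\<^sub>R b)" for m
    unfolding um_def z_def by (simp add: scaleR_sum_right)
  have "um \<longlonglongrightarrow> u"
    unfolding umeq uc by (intro tendsto_sum tendsto_scaleR floor_lim tendsto_const)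
  then have "(\<lambda>m. f (um m)) \<longlonglongrightarrow> f u"
    unfolding f_def N_def ip_eq by (intro tendsto_intros)
  then have "0 \<le> f u" by (rule LIMSEQ_le_const) (use fz in auto)
  then show ?thesis by (simp add: f_def)
qed


end

context zl begin

definition D :: "real^'n \<Rightarrow> real^'n" where "D v = (\<chi> i. sqrt (w i) * v$i)"

lemma D_linear: "linear D"
  by (rule linearI) (simp_all add: D_def vec_eq_iff algebra_simps)

lemma ip_D: "ip a b = D a \<bullet> D b"
proof -
  have eq: "w i * a$i * b$i = sqrt (w i) * a$i * (sqrt (w i) * b$i)" for i
  proof -
    have "sqrt (w i) * sqrt (w i) = w i" using wpos[of i] by simp
    then show "w i * a$i * b$i = sqrt (w i) * a$i * (sqrt (w i) * b$i)"
      by (metis mult.assoc mult.left_commute)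
  qed
  show ?thesis unfolding ip_eq inner_vec_def D_def vec_lambda_beta inner_real_def
    by (intro sum.cong refl) (rule eq)
qed

lemma proj_exists: "\<exists>x\<in>span L. \<forall>f\<in>span L. ip (y - x) f = 0"
proof -
  obtain a z where a: "a \<in> span (D ` span L)"
    and z: "\<And>f. f \<in> span (D ` span L) \<Longrightarrow> orthogonal z f" and dy: "D y = a + z"
    using orthogonal_subspace_decomp_exists[of "D ` span L" "D y"] by blast
  have "span (D ` span L) = D ` span L"
    using linear_span_image[OF D_linear, of "span L"] by (simp add: span_span)
  with a obtain y0 where y0: "y0 \<in> span L" "a = D y0" by auto
  have "D (y - y0) = z" using dy y0 linear_diff[OF D_linear] by simp
  have "ip (y - y0) f = 0" if "f \<in> span L" for f
  proof -
    have "D f \<in> span (D ` span L)" using that by (auto intro: span_base)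
    then have "orthogonal z (D f)" by (rule z)
    then show ?thesis unfolding ip_D \<open>D (y - y0) = z\<close> by (simp add: orthogonal_def)
  qed
  then show ?thesis using y0 by blast
qed

abbreviation P where "P \<equiv> orth_proj ip (span L)"

lemma proj_unique:
  assumes "x \<in> span L" "\<forall>f\<in>span L. ip (y - x) f = 0"
  shows "P y = x"
  unfolding orth_proj_def
proof (rule the_equality)
  show "x \<in> span L \<and> (\<forall>f\<in>span L. ip (y - x) f = 0)" using assms by blast
next
  fix x' assume h: "x' \<in> span L \<and> (\<forall>f\<in>span L. ip (y - x') f = 0)"
  have d: "x - x' \<in> span L" using h assms(1) by (auto intro: span_diff)
  have "ip (x - x') (x - x') = ip (y - x') (x - x') - ip (y - x) (x - x')"
    using ip_diff_l[of "y - x'" "y - x" "x - x'"] by simp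
  also have "\<dots> = 0" using h assms d by auto
  finally show "x' = x" using ip_self_zero[of "x - x'"] by simp
qed

lemma proj_char: "P y \<in> span L \<and> (\<forall>f\<in>span L. ip (y - P y) f = 0)"
proof -
  obtain x where "x \<in> span L" "\<forall>f\<in>span L. ip (y - x) f = 0" using proj_exists by blast
  then show ?thesis using proj_unique by simp
qed

lemma proj_linear: "linear P"
proof (rule linearI)
  fix a b
  show "P (a + b) = P a + P b"
  proof (rule proj_unique)
    show "P a + P b \<in> span L" using proj_char by (auto intro: span_add)
    have e: "a + b - (P a + P b) = (a - P a) + (b - P b)" by simp
    show "\<forall>f\<in>span L. ip (a + b - (P a + P b)) f = 0"
    proof
      fix f assume f: "f \<in> span L"
      have "ip (a + b - (P a + P b)) f = ip (a - P a) f + ip (b - P b) f" unfolding e by (rule ip_add_l)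
      then show "ip (a + b - (P a + P b)) f = 0" using proj_char f by simp
    qed
  qed
next
  fix c a
  show "P (c *\<^sub>R a) = c *\<^sub>R P a"
  proof (rule proj_unique)
    show "c *\<^sub>R P a \<in> span L" using proj_char by (auto intro: span_scale)
    have "c *\<^sub>R a - c *\<^sub>R P a = c *\<^sub>R (a - P a)" by (simp add: algebra_simps)
    then show "\<forall>f\<in>span L. ip (c *\<^sub>R a - c *\<^sub>R P a) f = 0" using proj_char by (simp add: ip_scale_l)
  qed
qed

lemma ip_axis: "ip x (axis i c) = w i * x$i * c"
  by (simp add: ip_eq axis_def if_distrib[of "\<lambda>t. _ * t"] cong: if_cong)

lemma ip_axis2: "ip (axis i c) (axis i c) = w i * c * c"
  by (simp add: ip_axis)

lemma half_ineq:
  assumes y: "\<forall>i. \<bar>y$i\<bar> \<le> 1/2" and v: "int_vec v"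
  shows "2 * ip y v \<le> ip v v"
proof -
  have "w i * (2 * y$i * v$i) \<le> w i * (v$i * v$i)" for i
  proof -
    have vi: "v$i \<in> \<int>" using v by (simp add: int_vec_def)
    have a: "2 * y$i * v$i \<le> \<bar>v$i\<bar>"
    proof -
      have "2 * y$i * v$i \<le> 2 * \<bar>y$i\<bar> * \<bar>v$i\<bar>" by (simp add: abs_mult[symmetric] mult.assoc)
      also have "\<dots> \<le> 1 * \<bar>v$i\<bar>" using y[THEN spec, of i] by (intro mult_right_mono) auto
      finally show ?thesis by simp
    qed
    have b: "\<bar>v$i\<bar> \<le> v$i * v$i"
    proof (cases "v$i = 0")
      case False
      then have "1 \<le> \<bar>v$i\<bar>" using vi by (intro Ints_nonzero_abs_ge1)
      then have "\<bar>v$i\<bar> * 1 \<le> \<bar>v$i\<bar> * \<bar>v$i\<bar>" by (intro mult_left_mono) auto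
      then show ?thesis by (simp add: abs_mult[symmetric])
    qed simp
    show ?thesis using a b wpos[of i] by (intro mult_left_mono) auto
  qed
  then have "(\<Sum>i\<in>UNIV. w i * (2 * y$i * v$i)) \<le> (\<Sum>i\<in>UNIV. w i * (v$i * v$i))"
    by (intro sum_mono)
  then show ?thesis by (simp add: ip_eq sum_distrib_left algebra_simps)
qed

lemma span_Zn: "span (Zn :: (real^'n) set) = UNIV"
proof -
  have "x \<in> span Zn" for x :: "real^'n"
  proof -
    have ax: "axis i 1 \<in> Zn" for i :: 'n by (auto simp: Zn_def int_vec_def axis_def)
    have "(\<Sum>i\<in>UNIV. x$i *\<^sub>R axis i (1::real)) \<in> span Zn"
      by (rule span_sum) (auto intro: span_scale span_base ax)
    moreover have "(\<Sum>i\<in>UNIV. x$i *\<^sub>R axis i (1::real)) = x"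
      using basis_expansion[of x] by (simp add: scalar_mult_eq_scaleR)
    ultimately show ?thesis by simp
  qed
  then show ?thesis by auto
qed

lemma DV_Zn_ineq: "x \<in> DV ip Zn \<Longrightarrow> v \<in> Zn \<Longrightarrow> 2 * ip x v \<le> ip v v"
proof -
  assume "x \<in> DV ip Zn" "v \<in> Zn"
  then have "ip x x \<le> ip (x - v) (x - v)" unfolding DV_def by blast
  then show ?thesis unfolding ip_expand by linarith
qed

lemma DV_Zn: "DV ip Zn = half_cube"
proof (intro set_eqI iffI)
  fix x assume x: "x \<in> DV ip Zn"
  have "-1/2 \<le> x$i \<and> x$i \<le> 1/2" for i
  proof -
    have Z1: "axis i 1 \<in> Zn" "axis i (-1) \<in> Zn" by (auto simp: Zn_def int_vec_def axis_def)
    have "2 * ip x (axis i 1) \<le> ip (axis i 1) (axis i 1)"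
      by (rule DV_Zn_ineq[OF x Z1(1)])
    then have "w i * (2 * x$i) \<le> w i * 1" unfolding ip_axis2 ip_axis by (simp add: algebra_simps)
    then have 1: "2 * x$i \<le> 1" using wpos[of i] by (rule mult_left_le_imp_le)
    have "2 * ip x (axis i (-1)) \<le> ip (axis i (-1)) (axis i (-1))"
      by (rule DV_Zn_ineq[OF x Z1(2)])
    then have "w i * (- 2 * x$i) \<le> w i * 1" unfolding ip_axis2 ip_axis by (simp add: algebra_simps)
    then have 2: "- 2 * x$i \<le> 1" using wpos[of i] by (rule mult_left_le_imp_le)
    show ?thesis using 1 2 by simp
  qed
  then show "x \<in> half_cube" by (simp add: half_cube_def)
next
  fix x :: "real^'n" assume x: "x \<in> half_cube"
  have hx: "\<forall>i. \<bar>x$i\<bar> \<le> 1/2"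
  proof
    fix i have "-1/2 \<le> x$i \<and> x$i \<le> 1/2" using x by (simp add: half_cube_def)
    then show "\<bar>x$i\<bar> \<le> 1/2" by linarith
  qed
  have "ip x x \<le> ip (x - v) (x - v)" if "v \<in> Zn" for v
  proof -
    have "2 * ip x v \<le> ip v v" using half_ineq[OF hx] that by (simp add: Zn_def)
    then show ?thesis unfolding ip_expand by linarith
  qed
  then show "x \<in> DV ip Zn" by (simp add: DV_def span_Zn)
qed

end


context zl begin

lemma half_cube_cbox: "(half_cube :: (real^'n) set) = cbox (\<chi> i. -1/2) (\<chi> i. 1/2)"
  by (auto simp: half_cube_def mem_box_cart)

lemma proj_sub: "P ` half_cube \<subseteq> DV ip L"
proof
  fix x assume "x \<in> P ` half_cube"
  then obtain y where y: "y \<in> half_cube" and xy: "x = P y" by auto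
  have hy: "\<forall>i. \<bar>y$i\<bar> \<le> 1/2"
  proof
    fix i have "-1/2 \<le> y$i \<and> y$i \<le> 1/2" using y by (simp add: half_cube_def)
    then show "\<bar>y$i\<bar> \<le> 1/2" by linarith
  qed
  have xs: "x \<in> span L" using proj_char xy by simp
  have "ip x x \<le> ip (x - v) (x - v)" if v: "v \<in> L" for v
  proof -
    have "v \<in> span L" using v by (rule span_base)
    then have "ip (y - x) v = 0" using proj_char xy by simp
    then have "ip x v = ip y v" by (simp add: ip_diff_l)
    moreover have "int_vec v" using v L_int by (simp add: int_vec_def)
    then have "2 * ip y v \<le> ip v v" by (rule half_ineq[OF hy])
    ultimately show ?thesis unfolding ip_expand by linarith
  qed
  then show "x \<in> DV ip L" using xs by (simp add: DV_def)
qed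

lemma N_neg: "N (- u) = N u"
  by (simp add: N_def)

lemma sub_proj: "DV ip L \<subseteq> P ` half_cube"
proof
  fix x assume x: "x \<in> DV ip L"
  have xs: "x \<in> span L" using x by (simp add: DV_def)
  show "x \<in> P ` half_cube"
  proof (rule ccontr)
    assume nx: "x \<notin> P ` half_cube"
    have lin: "linear P" by (rule proj_linear)
    have cont: "continuous_on UNIV P"
      using lin by (simp add: linear_continuous_on linear_conv_bounded_linear)
    have "compact (P ` half_cube)" unfolding half_cube_cbox
      by (rule compact_continuous_image[OF continuous_on_subset[OF cont]]) auto
    then have cl: "closed (P ` half_cube)" by (rule compact_imp_closed)
    have cv: "convex (P ` half_cube)" unfolding half_cube_cbox
      by (rule convex_linear_image[OF lin convex_box(1)])
    obtain a b where ab: "inner a x < b" and abK: "\<And>k. k \<in> P ` half_cube \<Longrightarrow> inner a k > b"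
      using separating_hyperplane_closed_point[OF cv cl nx] by blast
    define a' where "a' = (\<chi> i. a$i / w i)"
    have ipa': "ip a' k = inner a k" for k
    proof -
      have "w i * (a$i / w i) * k$i = a$i * k$i" for i using wpos[of i] by (simp add: field_simps)
      then show ?thesis unfolding ip_eq inner_vec_def a'_def vec_lambda_beta inner_real_def
        by (intro sum.cong refl)
    qed
    define u where "u = P a'"
    have us: "u \<in> span L" using proj_char u_def by simp
    have ipu: "ip a' k = ip u k" if "k \<in> span L" for k
    proof -
      have "ip (a' - u) k = 0" using proj_char that u_def by simp
      then show ?thesis by (simp add: ip_diff_l)
    qed
    define y where "y = (\<chi> i. - sgn (u$i) / 2)"
    have yh: "y \<in> half_cube" unfolding half_cube_def y_def by (auto simp: sgn_if)
    have "P y \<in> P ` half_cube" using yh by simp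
    then have "b < inner a (P y)" by (rule abK)
    also have "\<dots> = ip u (P y)" using ipa' ipu proj_char by metis
    also have "\<dots> = ip u y"
    proof -
      have "ip (y - P y) u = 0" using proj_char us by simp
      then have "ip y u = ip (P y) u" by (simp add: ip_diff_l)
      then show ?thesis by (metis ip_sym)
    qed
    also have "\<dots> = - N u / 2"
    proof -
      have "w i * u$i * (- sgn (u$i) / 2) = - (w i * \<bar>u$i\<bar>) / 2" for i
        by (cases "u$i" "0::real" rule: linorder_cases) auto
      then have "ip u y = (\<Sum>i\<in>UNIV. - (w i * \<bar>u$i\<bar>) / 2)"
        unfolding ip_eq y_def vec_lambda_beta by (intro sum.cong refl)
      also have "\<dots> = - N u / 2" by (simp add: N_def sum_negf sum_divide_distrib)
      finally show ?thesis .
    qed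
    finally have 1: "b < - N u / 2" .
    have "inner a x = ip u x" using ipa' ipu xs by metis
    with ab have 2: "ip u x < b" by simp
    have "2 * ip x (- u) \<le> N (- u)" using main_span[OF x] us by (simp add: span_neg)
    then have "- 2 * ip u x \<le> N u" by (simp add: N_neg ip_neg_r ip_sym)
    with 1 2 show False by linarith
  qed
qed

lemma DV_L_eq: "DV ip L = P ` half_cube"
  using proj_sub sub_proj by blast

end


theorem theorem1:
  fixes L :: "(real^'n) set" and ip :: "real^'n \<Rightarrow> real^'n \<Rightarrow> real"
  assumes "is_int_lattice L"
    and "is_inner_product ip"
    and "\<forall>i j. i \<noteq> j \<longrightarrow> ip (axis i 1) (axis j 1) = 0"
    and "zonotopal_lattice L ip"
  shows "DV ip L = orth_proj ip (span L) ` DV ip Zn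
       \<and> orth_proj ip (span L) ` DV ip Zn = orth_proj ip (span L) ` half_cube"
proof -
  obtain B where B: "finite B" "\<forall>b\<in>B. int_vec b"
    "L = {\<Sum>b\<in>B. c b *\<^sub>R b | c. \<forall>b\<in>B. c b \<in> \<int>}"
    using assms(1) unfolding is_int_lattice_def by blast
  define w where "w i = ip (axis i 1) (axis i 1)" for i
  have bl: "bilinear ip" and pd: "\<forall>x. x \<noteq> 0 \<longrightarrow> ip x x > 0"
    using assms(2) unfolding is_inner_product_def by auto
  have wpos: "w i > 0" for i
  proof -
    have "axis i (1::real) \<noteq> 0" by simp
    then show ?thesis unfolding w_def using pd by blast
  qed
  have ipe: "ip x y = (\<Sum>i\<in>UNIV. w i * x$i * y$i)" for x y
    using ip_formula[OF bl assms(3), of x y] by (simp only: w_def)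
  have Z: "zl L ip w B" unfolding zl_def using ipe wpos B assms(4) by blast
  have e1: "DV ip L = orth_proj ip (span L) ` half_cube" by (rule zl.DV_L_eq[OF Z])
  have e2: "DV ip Zn = half_cube" by (rule zl.DV_Zn[OF Z])
  show ?thesis unfolding e2 using e1 by (rule conjI) (rule refl)
qed

end
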